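(* Let $p$ be any prime and let $F_{at}:\mathbb{F}_p^2\to\mathbb{F}_p^2$ be the map $F_{at}(x,y)=(x^2y,\;x^2y+xy^2)$, where $\mathbb{F}_p=\mathbb{Z}/p\mathbb{Z}$. Then the $p$-th iterate $F_{at}^{\circ p}$ sends every point of $\mathbb{F}_p^2$ to $(0,0)$.
   Context: $F_{at}$ is the reduction modulo $p$ of the integer polynomial map $(x,y)\mapsto(x^2y,\,x^2y+xy^2)$ (called the "additive trap"); $F_{at}^{\circ p}$ denotes its $p$-fold composition with itself. *)

theory Defs
  imports "HOL-Number_Theory.Number_Theory"
begin

text \<open>The additive trap over F_p, with F_p represented by the residues {0..<p}
  of the integers (arithmetic reduced mod p).\<close>
definition F_at :: "int \<Rightarrow> int \<times> int \<Rightarrow> int \<times> int" where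
  "F_at p = (\<lambda>(x, y). ((x^2 * y) mod p, (x^2 * y + x * y^2) mod p))"

end

theory Submission
  imports Defs
begin

lemma F_zero: "(F_at p ^^ n) (0, 0) = (0, 0)"
  by (induction n) (auto simp: F_at_def)

lemma key:
  fixes p x y :: int
  assumes "p dvd (y + (int k + 1) * x)"
  shows "(F_at p ^^ (k + 2)) (x, y) = (0, 0)"
  using assms
proof (induction k arbitrary: x y)
  case 0
  have e: "x^2*y + x*y^2 = x*y*(y + x)" by (simp add: power2_eq_square algebra_simps)
  have "p dvd x^2*y + x*y^2" unfolding e using 0 by simp
  then have "(x^2*y + x*y^2) mod p = 0" by simp
  then show ?case by (simp add: F_at_def numeral_2_eq_2)
next
  case (Suc k)
  define x' where "x' = (x^2*y) mod p"
  define y' where "y' = (x^2*y + x*y^2) mod p"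
  have F: "F_at p (x, y) = (x', y')" by (simp add: F_at_def x'_def y'_def)
  have "(y' + (int k + 1) * x') mod p = ((x^2*y + x*y^2) + (int k + 1) * (x^2*y)) mod p"
    unfolding x'_def y'_def by (metis mod_add_eq mod_mod_trivial mod_mult_right_eq)
  also have "(x^2*y + x*y^2) + (int k + 1) * (x^2*y) = x*y*(y + (int (Suc k) + 1) * x)"
    by (simp add: power2_eq_square algebra_simps)
  also have "(x*y*(y + (int (Suc k) + 1) * x)) mod p = 0"
    using Suc.prems by simp
  finally have "p dvd (y' + (int k + 1) * x')" by (simp add: dvd_eq_mod_eq_0)
  then have "(F_at p ^^ (k + 2)) (x', y') = (0, 0)" by (rule Suc.IH)
  then show ?case
  proof -
    have "Suc k + 2 = (k + 2) + 1" by simp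
    then have "(F_at p ^^ (Suc k + 2)) (x, y) = (F_at p ^^ (k + 2)) (F_at p (x, y))"
      by (metis funpow_Suc_right o_apply add_Suc)
    then show ?thesis using \<open>(F_at p ^^ (k + 2)) (x', y') = (0, 0)\<close> F by simp
  qed
qed

theorem mainTheorem1:
  fixes p :: int and x y :: int
  assumes "prime p" and "x \<in> {0..<p}" and "y \<in> {0..<p}"
  shows "(F_at p ^^ nat p) (x, y) = (0, 0)"
proof -
  have p2: "p \<ge> 2" using assms(1) prime_ge_2_int by blast
  show ?thesis
  proof (cases "x = 0 \<or> y = 0")
    case True
    then have "F_at p (x, y) = (0, 0)" by (auto simp: F_at_def)
    moreover have "nat p = Suc (nat p - 1)" using p2 by simp
    ultimately show ?thesis
      by (metis F_zero funpow_Suc_right o_apply)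
  next
    case False
    have nd: "\<not> p dvd x" "\<not> p dvd y" using False assms
      by (auto dest: zdvd_imp_le simp: zdvd_not_zless)
    have "coprime x p" using nd assms(1)
      by (simp add: coprime_commute prime_imp_coprime)
    then obtain u where u: "[x * u = 1] (mod p)"
      using cong_solve_coprime_int by blast
    define t where "t = (- y * u) mod p"
    have t0: "0 \<le> t" "t < p" using p2 unfolding t_def by auto
    have "[y + t * x = y + (- y * u) * x] (mod p)"
      unfolding t_def cong_def by (metis mod_add_right_eq mod_mult_left_eq)
    also have "y + (- y * u) * x = y * (1 - x * u)" by (simp add: algebra_simps)
    also have "[y * (1 - x * u) = y * 0] (mod p)"
      by (intro cong_mult cong_refl) (use u in \<open>metis cong_diff cong_refl diff_self cong_sym\<close>)
    finally have dv: "p dvd (y + t * x)" by (simp add: cong_0_iff)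
    have "t \<noteq> 0" using dv nd by auto
    define k where "k = nat t - 1"
    have tk: "t = int k + 1" using \<open>t \<noteq> 0\<close> t0 unfolding k_def by simp
    have kle: "k + 2 \<le> nat p" using tk t0 by simp
    have K: "(F_at p ^^ (k + 2)) (x, y) = (0, 0)" using key[of p y k x] dv tk by simp
    have "nat p = (nat p - (k+2)) + (k+2)" using kle by simp
    then have "(F_at p ^^ nat p) (x, y) = (F_at p ^^ (nat p - (k+2))) ((F_at p ^^ (k+2)) (x, y))"
      by (metis funpow_add o_apply)
    then show ?thesis using K F_zero by simp
  qed
qed

end
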